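(* Let $L$ be a regular language over a finite alphabet $\Sigma$ and $\Delta$ a finite set of quantifier-free replacement queries (over string databases). Then $(q_L,\Delta)$ can be maintained in DynProp with suitable initialization.
   Context: Framework. A replacement rule for a relation symbol $R$ is $R := \mu_R(\bar p;\bar x)$, where $\mu_R$ is a first-order formula over the schema, $\bar x$ has the arity of $R$, and $\bar p$ is a tuple of parameter variables. A replacement query $\rho(\bar p)$ is a set of replacement rules for distinct relation symbols, all with the same parameter tuple $\bar p$; it is quantifier-free (resp. in $\mathrm{FO}[\exists^*]$) if all its formulas are quantifier-free (resp. existential). A change $\delta=\rho(\bar a)$ consists of $\rho$ and a tuple $\bar a$ of domain elements; $\delta(\mathcal D)$ replaces every relation $R$ having a rule in $\rho$ by $\{\bar b : \mathcal D\models \mu_R(\bar a;\bar b)\}$. A dynamic program operates on states consisting of an input database and an auxiliary database over a common fixed finite domain. For every allowed replacement query $\rho(\bar p)$ and every auxiliary symbol $T$ it has an update formula $\varphi_T(\bar p;\bar x)$ over input and auxiliary schema; on a change $\rho(\bar a)$ the input is replaced by its image and each $T$ becomes $\{\bar b: \text{old state}\models\varphi_T(\bar a,\bar b)\}$. A program maintains $(q,\Delta)$ if it has an auxiliary relation $Q$ that, after every nonempty sequence of changes from $\Delta$ applied to the initial input database, equals $q$ of the current input. DynFO / DynProp: update formulas first-order / quantifier-free. "With suitable initialization" means the initial auxiliary database need not be empty but may be a suitable auxiliary database depending on the initial input (polynomial-time computable in all cases of the paper). Strings: a word over $\Sigma$ is represented by a database with domain $\{1,\dots,n\}$, the natural linear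 order $<$, constants $\min=1$, $\max=n$, and one unary relation $R_\sigma$ per $\sigma\in\Sigma$, where each element is in at most one $R_\sigma$. Position $i$ carries $w_i=\sigma$ if $i\in R_\sigma$ and $w_i=\epsilon$ otherwise, and the database represents $w_1\cdots w_n$. Initially all $R_\sigma$ are empty. Changes never modify $<$, $\min$, $\max$, and only replacement queries are applied whose results again have each position in at most one $R_\sigma$. $q_L$ is the Boolean query that is true iff the represented word is in $L$. *)

theory Defs
  imports Main
begin

datatype dterm = Var nat | Min | Max

datatype 'r qf =
    QTrue | QFalse
  | Atom 'r "dterm list"
  | Eq dterm dterm
  | Less dterm dterm
  | Neg "'r qf"
  | Conj "'r qf" "'r qf"
  | Disj "'r qf" "'r qf"

fun tval :: "nat \<Rightarrow> (nat \<Rightarrow> nat) \<Rightarrow> dterm \<Rightarrow> nat" where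
  "tval n v (Var i) = v i"
| "tval n v Min = 1"
| "tval n v Max = n"

fun sat :: "nat \<Rightarrow> ('r \<Rightarrow> nat list set) \<Rightarrow> (nat \<Rightarrow> nat) \<Rightarrow> 'r qf \<Rightarrow> bool" where
  "sat n I v QTrue = True"
| "sat n I v QFalse = False"
| "sat n I v (Atom r ts) = (map (tval n v) ts \<in> I r)"
| "sat n I v (Eq s t) = (tval n v s = tval n v t)"
| "sat n I v (Less s t) = (tval n v s < tval n v t)"
| "sat n I v (Neg f) = (\<not> sat n I v f)"
| "sat n I v (Conj f g) = (sat n I v f \<and> sat n I v g)"
| "sat n I v (Disj f g) = (sat n I v f \<or> sat n I v g)"

fun rels :: "'r qf \<Rightarrow> 'r set" where
  "rels (Atom r ts) = {r}"
| "rels (Neg f) = rels f"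
| "rels (Conj f g) = rels f \<union> rels g"
| "rels (Disj f g) = rels f \<union> rels g"
| "rels _ = {}"

text \<open>Variable assignment from a tuple: variable i denotes the i-th entry
  (out-of-range variables default to min, which is harmless).\<close>
definition env :: "nat list \<Rightarrow> nat \<Rightarrow> nat" where
  "env xs i = (if i < length xs then xs ! i else 1)"

definition regular :: "('a::finite) list set \<Rightarrow> bool" where
  "regular L \<longleftrightarrow> (\<exists>(S::nat set) (\<delta>::nat \<Rightarrow> 'a \<Rightarrow> nat) q0 F.
      finite S \<and> q0 \<in> S \<and> (\<forall>q\<in>S. \<forall>a. \<delta> q a \<in> S) \<and> F \<subseteq> S \<and>
      L = {w. foldl \<delta> q0 w \<in> F})"

text \<open>An input database over domain {1..n}: one unary relation R_sigma per letter.\<close>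
definition inp_interp :: "('a \<Rightarrow> nat set) \<Rightarrow> 'a \<Rightarrow> nat list set" where
  "inp_interp R a = {[i] | i. i \<in> R a}"

definition valid_strdb :: "nat \<Rightarrow> ('a \<Rightarrow> nat set) \<Rightarrow> bool" where
  "valid_strdb n R \<longleftrightarrow> (\<forall>a. R a \<subseteq> {1..n}) \<and> (\<forall>i a b. i \<in> R a \<longrightarrow> i \<in> R b \<longrightarrow> a = b)"

text \<open>The represented word w_1 ... w_n (positions without letter carry epsilon).\<close>
definition word :: "nat \<Rightarrow> ('a \<Rightarrow> nat set) \<Rightarrow> 'a list" where
  "word n R = concat (map (\<lambda>i. if \<exists>a. i \<in> R a then [THE a. i \<in> R a] else []) [1..<Suc n])"

text \<open>A quantifier-free replacement query: (k, rules), k = number of parameters,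
  rules a = Some mu means a rule R_a := mu(p;x), where the parameters p are the
  variables 0..k-1 and x is the variable k.\<close>
type_synonym 'a rq = "nat \<times> ('a \<Rightarrow> 'a qf option)"

definition apply_rq :: "nat \<Rightarrow> 'a rq \<Rightarrow> nat list \<Rightarrow> ('a \<Rightarrow> nat set) \<Rightarrow> ('a \<Rightarrow> nat set)" where
  "apply_rq n \<rho> as R = (\<lambda>a. case snd \<rho> a of
      None \<Rightarrow> R a
    | Some \<mu> \<Rightarrow> {b \<in> {1..n}. sat n (inp_interp R) (env (as @ [b])) \<mu>})"

text \<open>Auxiliary symbols are 0..naux-1 with arities; qsym is the designated 0-ary
  query symbol Q.  upd rho T is the update formula phi_T(p;x) for replacement query rho
  over the input and auxiliary schema: parameters are variables 0..k-1, x is k..k+ar T-1.\<close>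
record 'a dynprog =
  naux :: nat
  arity :: "nat \<Rightarrow> nat"
  qsym :: nat
  upd :: "'a rq \<Rightarrow> nat \<Rightarrow> ('a + nat) qf"

definition wf_dynprog :: "'a rq set \<Rightarrow> 'a dynprog \<Rightarrow> bool" where
  "wf_dynprog \<Delta> P \<longleftrightarrow> qsym P < naux P \<and> arity P (qsym P) = 0 \<and>
     (\<forall>\<rho>\<in>\<Delta>. \<forall>T < naux P. \<forall>r \<in> rels (upd P \<rho> T).
        (case r of Inl _ \<Rightarrow> True | Inr T' \<Rightarrow> T' < naux P))"

definition state_interp :: "('a \<Rightarrow> nat set) \<Rightarrow> (nat \<Rightarrow> nat list set) \<Rightarrow> ('a + nat) \<Rightarrow> nat list set" where
  "state_interp R A r = (case r of Inl a \<Rightarrow> inp_interp R a | Inr T \<Rightarrow> A T)"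

definition upd_aux :: "nat \<Rightarrow> 'a dynprog \<Rightarrow> 'a rq \<Rightarrow> nat list \<Rightarrow> ('a \<Rightarrow> nat set)
    \<Rightarrow> (nat \<Rightarrow> nat list set) \<Rightarrow> (nat \<Rightarrow> nat list set)" where
  "upd_aux n P \<rho> as R A = (\<lambda>T. if T < naux P then
      {bs. length bs = arity P T \<and> set bs \<subseteq> {1..n} \<and>
           sat n (state_interp R A) (env (as @ bs)) (upd P \<rho> T)}
    else {})"

fun allowed_seq :: "nat \<Rightarrow> 'a rq set \<Rightarrow> ('a \<Rightarrow> nat set) \<Rightarrow> ('a rq \<times> nat list) list \<Rightarrow> bool" where
  "allowed_seq n \<Delta> R [] = True"
| "allowed_seq n \<Delta> R ((\<rho>, as) # cs) =
     (\<rho> \<in> \<Delta> \<and> length as = fst \<rho> \<and> set as \<subseteq> {1..n} \<and>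
      valid_strdb n (apply_rq n \<rho> as R) \<and> allowed_seq n \<Delta> (apply_rq n \<rho> as R) cs)"

fun run :: "nat \<Rightarrow> 'a dynprog \<Rightarrow> ('a rq \<times> nat list) list \<Rightarrow> ('a \<Rightarrow> nat set)
    \<Rightarrow> (nat \<Rightarrow> nat list set) \<Rightarrow> ('a \<Rightarrow> nat set) \<times> (nat \<Rightarrow> nat list set)" where
  "run n P [] R A = (R, A)"
| "run n P ((\<rho>, as) # cs) R A = run n P cs (apply_rq n \<rho> as R) (upd_aux n P \<rho> as R A)"

definition maintains_init :: "'a rq set \<Rightarrow> 'a list set \<Rightarrow> 'a dynprog \<Rightarrow> (nat \<Rightarrow> nat \<Rightarrow> nat list set) \<Rightarrow> bool" where
  "maintains_init \<Delta> L P init \<longleftrightarrow>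
     (\<forall>n \<ge> 1. \<forall>cs. cs \<noteq> [] \<longrightarrow> allowed_seq n \<Delta> (\<lambda>_. {}) cs \<longrightarrow>
        (let (R, A) = run n P cs (\<lambda>_. {}) (init n)
         in ([] \<in> A (qsym P) \<longleftrightarrow> word n R \<in> L)))"

definition dynprop_init_maintainable :: "'a rq set \<Rightarrow> 'a list set \<Rightarrow> bool" where
  "dynprop_init_maintainable \<Delta> L \<longleftrightarrow>
     (\<exists>P init. wf_dynprog \<Delta> P \<and> maintains_init \<Delta> L P init)"

end

theory Submission
  imports Defs
begin

fun Disjl :: "'r qf list \<Rightarrow> 'r qf" where
  "Disjl [] = QFalse" | "Disjl (f # fs) = Disj f (Disjl fs)"
fun Conjl :: "'r qf list \<Rightarrow> 'r qf" where
  "Conjl [] = QTrue" | "Conjl (f # fs) = Conj f (Conjl fs)"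

lemma sat_Disjl: "sat n I v (Disjl fs) \<longleftrightarrow> (\<exists>f\<in>set fs. sat n I v f)"
  by (induction fs) auto
lemma sat_Conjl: "sat n I v (Conjl fs) \<longleftrightarrow> (\<forall>f\<in>set fs. sat n I v f)"
  by (induction fs) auto
lemma rels_Disjl: "rels (Disjl fs) = (\<Union>f\<in>set fs. rels f)"
  by (induction fs) auto
lemma rels_Conjl: "rels (Conjl fs) = (\<Union>f\<in>set fs. rels f)"
  by (induction fs) auto

lemma ball_map: "(\<forall>f\<in>set (map g xs). P f) = (\<forall>x\<in>set xs. P (g x))" by simp

definition list_of :: "'x set \<Rightarrow> 'x list" where "list_of X = (SOME xs. set xs = X)"
lemma set_list_of: "finite X \<Longrightarrow> set (list_of X) = X"
  unfolding list_of_def by (metis (mono_tags) finite_list someI_ex)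

lemma sat_cong:
  assumes "\<And>s t. (tval n1 e1 s < tval n1 e1 t) = (tval n2 e2 s < tval n2 e2 t)"
    and "\<And>s t. (tval n1 e1 s = tval n1 e1 t) = (tval n2 e2 s = tval n2 e2 t)"
    and "\<And>r ts. (map (tval n1 e1) ts \<in> I1 r) = (map (tval n2 e2) ts \<in> I2 r)"
  shows "sat n1 I1 e1 \<mu> = sat n2 I2 e2 \<mu>"
  using assms by (induction \<mu>) auto

definition lets :: "('a \<Rightarrow> nat set) \<Rightarrow> nat \<Rightarrow> 'a set" where "lets R y = {a. y \<in> R a}"
definition symb :: "'a set \<Rightarrow> 'a list" where "symb X = (if X = {} then [] else [THE a. a \<in> X])"
definition seg :: "('a set \<Rightarrow> 'a set) \<Rightarrow> ('a \<Rightarrow> nat set) \<Rightarrow> nat \<Rightarrow> nat \<Rightarrow> 'a list" where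
  "seg h R u w = concat (map (\<lambda>y. symb (h (lets R y))) [Suc u..<w])"

lemma word_alt: "word n R = concat (map (\<lambda>y. symb (lets R y)) [1..<Suc n])"
  unfolding word_def symb_def lets_def by (intro arg_cong[where f=concat] map_cong) auto

lemma upt_split3: "a \<le> c \<Longrightarrow> c < w \<Longrightarrow> [a..<w] = [a..<c] @ [c] @ [Suc c..<w]"
proof -
  assume a: "a \<le> c" "c < w"
  have "[a..<w] = [a..<c] @ [c..<w]" using upt_add_eq_append[of a c "w - c"] a by simp
  also have "[c..<w] = c # [Suc c..<w]" using a(2) by (rule upt_conv_Cons)
  finally show ?thesis by simp
qed
lemma upt_1n: "2 \<le> n \<Longrightarrow> [1..<Suc n] = [1] @ [Suc 1..<n] @ [n]"
proof -
  assume a: "2 \<le> n"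
  have "[1..<Suc n] = [1..<n] @ [n]" using a by simp
  also have "[1..<n] = 1 # [Suc 1..<n]" using a by (intro upt_conv_Cons) simp
  finally show ?thesis by simp
qed

lemma seg_split: "u < c \<Longrightarrow> c < w \<Longrightarrow> seg h R u w = seg h R u c @ symb (h (lets R c)) @ seg h R c w"
proof -
  assume a: "u < c" "c < w"
  have "[Suc u..<w] = [Suc u..<c] @ [c] @ [Suc c..<w]"
    using a by (intro upt_split3) simp_all
  then show ?thesis unfolding seg_def by simp
qed

lemma word_split: "2 \<le> n \<Longrightarrow> word n R = symb (lets R 1) @ seg id R 1 n @ symb (lets R n)"
proof -
  assume "2 \<le> n"
  then have "[1..<Suc n] = [1] @ [Suc 1..<n] @ [n]"
    by (rule upt_1n)
  then show ?thesis unfolding word_alt seg_def by simp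
qed

lemma word_one: "word 1 R = symb (lets R 1)"
  unfolding word_alt by simp

definition tsm :: "nat \<Rightarrow> dterm list" where "tsm m = map Var [0..<m] @ [dterm.Min, dterm.Max]"

lemma env_pt:
  assumes "length as = k"
  shows "tval n (env (as @ [y])) s = (case s of Var i \<Rightarrow> (if i < k then as ! i else if i = k then y else 1) | Min \<Rightarrow> 1 | Max \<Rightarrow> n)"
  using assms by (cases s) (auto simp: env_def nth_append)



lemma inp_map: "(map f ts \<in> inp_interp R a) = (case ts of [x] \<Rightarrow> f x \<in> R a | _ \<Rightarrow> False)"
  unfolding inp_interp_def by (cases ts rule: remdups_adj.cases) auto

lemma map_env: "length as = k \<Longrightarrow> map (env (as @ bs)) [0..<k] = as"
  by (rule nth_equalityI) (auto simp: env_def nth_append)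

lemma tval_range: "1 \<le> n \<Longrightarrow> \<forall>i. v i \<in> {1..n} \<Longrightarrow> tval n v t \<in> {1..n}"
  by (cases t) auto

context
  fixes S :: "nat set" and \<delta> :: "nat \<Rightarrow> 'a::finite \<Rightarrow> nat" and q0 :: nat and F :: "nat set"
    and enc :: "(('a set \<Rightarrow> 'a set) \<times> nat \<times> nat) \<Rightarrow> nat"
  assumes finS: "finite S" and clos: "\<And>q a. q \<in> S \<Longrightarrow> \<delta> q a \<in> S" and q0S: "q0 \<in> S"
    and encb: "bij_betw enc (UNIV \<times> S \<times> S) {0..<card (UNIV \<times> S \<times> S :: (('a set \<Rightarrow> 'a set) \<times> nat \<times> nat) set)}"
begin

abbreviation CC :: "(('a set \<Rightarrow> 'a set) \<times> nat \<times> nat) set" where "CC \<equiv> UNIV \<times> S \<times> S"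

lemma finCC: "finite CC" using finS by simp

lemma foldl_S: "q \<in> S \<Longrightarrow> foldl \<delta> q w \<in> S"
  by (induction w arbitrary: q) (auto simp: clos)

definition Tsem :: "('a \<Rightarrow> nat set) \<Rightarrow> ('a set \<Rightarrow> 'a set) \<times> nat \<times> nat \<Rightarrow> nat \<Rightarrow> nat \<Rightarrow> bool" where
  "Tsem R c i j = (case c of (h,q,q') \<Rightarrow> foldl \<delta> q (seg h R i j) = q')"

definition auxinv :: "nat \<Rightarrow> ('a \<Rightarrow> nat set) \<Rightarrow> (nat \<Rightarrow> nat list set) \<Rightarrow> bool" where
  "auxinv n R A = (\<forall>c\<in>CC. A (enc c) = {[i,j] | i j. i \<in> {1..n} \<and> j \<in> {1..n} \<and> Tsem R c i j})"

definition good :: "nat \<Rightarrow> ('a \<Rightarrow> nat set) \<Rightarrow> (nat \<Rightarrow> nat list set) \<Rightarrow> (nat \<Rightarrow> nat) \<Rightarrow> bool" where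
  "good n R A v = (1 \<le> n \<and> auxinv n R A \<and> (\<forall>i. v i \<in> {1..n}))"

definition At :: "nat \<Rightarrow> ('a + nat) qf set" where
  "At m = (\<lambda>(s,t). Eq s t) ` (set (tsm m) \<times> set (tsm m))
        \<union> (\<lambda>(s,t). Less s t) ` (set (tsm m) \<times> set (tsm m))
        \<union> (\<lambda>(a,t). Atom (Inl a) [t]) ` (UNIV \<times> set (tsm m))
        \<union> (\<lambda>(c,s,t). Atom (Inr (enc c)) [s,t]) ` (CC \<times> set (tsm m) \<times> set (tsm m))"

lemma finite_At: "finite (At m)"
  unfolding At_def using finCC by simp

definition tyq :: "nat \<Rightarrow> nat \<Rightarrow> ('a \<Rightarrow> nat set) \<Rightarrow> (nat \<Rightarrow> nat list set) \<Rightarrow> (nat \<Rightarrow> nat) \<Rightarrow> ('a + nat) qf set" where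
  "tyq m n R A v = {\<alpha> \<in> At m. sat n (state_interp R A) v \<alpha>}"

definition charf :: "nat \<Rightarrow> ('a + nat) qf set \<Rightarrow> ('a + nat) qf" where
  "charf m \<Phi> = Conjl (map (\<lambda>\<alpha>. if \<alpha> \<in> \<Phi> then \<alpha> else Neg \<alpha>) (list_of (At m)))"

definition GT :: "nat \<Rightarrow> (nat \<Rightarrow> ('a \<Rightarrow> nat set) \<Rightarrow> (nat \<Rightarrow> nat) \<Rightarrow> bool) \<Rightarrow> ('a + nat) qf set set" where
  "GT m Pr = {\<Phi>. \<exists>n R A v. good n R A v \<and> tyq m n R A v = \<Phi> \<and> Pr n R v}"

definition defin :: "nat \<Rightarrow> (nat \<Rightarrow> ('a \<Rightarrow> nat set) \<Rightarrow> (nat \<Rightarrow> nat) \<Rightarrow> bool) \<Rightarrow> ('a + nat) qf" where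
  "defin m Pr = Disjl (map (charf m) (list_of (GT m Pr)))"

lemma sat_charf: "\<Phi> \<subseteq> At m \<Longrightarrow> sat n (state_interp R A) v (charf m \<Phi>) \<longleftrightarrow> tyq m n R A v = \<Phi>"
proof -
  assume a: "\<Phi> \<subseteq> At m"
  have "sat n (state_interp R A) v (charf m \<Phi>) \<longleftrightarrow> (\<forall>\<alpha>\<in>At m. (\<alpha> \<in> \<Phi> \<longleftrightarrow> sat n (state_interp R A) v \<alpha>))"
  proof -
    have "sat n (state_interp R A) v (charf m \<Phi>) \<longleftrightarrow> (\<forall>\<alpha>\<in>At m. sat n (state_interp R A) v (if \<alpha> \<in> \<Phi> then \<alpha> else Neg \<alpha>))"
      unfolding charf_def sat_Conjl ball_map set_list_of[OF finite_At] ..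
    also have "\<dots> \<longleftrightarrow> (\<forall>\<alpha>\<in>At m. (\<alpha> \<in> \<Phi> \<longleftrightarrow> sat n (state_interp R A) v \<alpha>))"
      by (rule ball_cong[OF refl]) simp
    finally show ?thesis .
  qed
  then show ?thesis using a unfolding tyq_def set_eq_iff by blast
qed

lemma finite_GT: "finite (GT m Pr)"
proof -
  have "GT m Pr \<subseteq> Pow (At m)" unfolding GT_def tyq_def by auto
  then show ?thesis using finite_At by (meson finite_Pow_iff finite_subset)
qed

lemma defin_correct:
  assumes inv: "\<And>n1 R1 A1 v1 n2 R2 A2 v2. good n1 R1 A1 v1 \<Longrightarrow> good n2 R2 A2 v2 \<Longrightarrow>
       tyq m n1 R1 A1 v1 = tyq m n2 R2 A2 v2 \<Longrightarrow> Pr n1 R1 v1 \<Longrightarrow> Pr n2 R2 v2"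
    and g: "good n R A v"
  shows "sat n (state_interp R A) v (defin m Pr) \<longleftrightarrow> Pr n R v"
proof -
  have sub: "\<Phi> \<in> GT m Pr \<Longrightarrow> \<Phi> \<subseteq> At m" for \<Phi> unfolding GT_def tyq_def by auto
  have "sat n (state_interp R A) v (defin m Pr) \<longleftrightarrow> (\<exists>\<Phi>\<in>GT m Pr. sat n (state_interp R A) v (charf m \<Phi>))"
    unfolding defin_def sat_Disjl by (simp add: set_list_of[OF finite_GT])
  also have "\<dots> \<longleftrightarrow> (\<exists>\<Phi>\<in>GT m Pr. tyq m n R A v = \<Phi>)"
    by (rule bex_cong[OF refl], rule sat_charf, erule sub)
  also have "\<dots> \<longleftrightarrow> Pr n R v"
  proof
    assume "\<exists>\<Phi>\<in>GT m Pr. tyq m n R A v = \<Phi>"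
    then obtain n1 R1 A1 v1 where "good n1 R1 A1 v1" "tyq m n1 R1 A1 v1 = tyq m n R A v" "Pr n1 R1 v1"
      unfolding GT_def by auto
    then show "Pr n R v" using inv g by blast
  next
    assume "Pr n R v" then show "\<exists>\<Phi>\<in>GT m Pr. tyq m n R A v = \<Phi>" using g unfolding GT_def by auto
  qed
  finally show ?thesis .
qed

lemma rels_defin: "r \<in> rels (defin m Pr) \<Longrightarrow> (case r of Inl _ \<Rightarrow> True | Inr T \<Rightarrow> T < card CC)"
proof -
  assume "r \<in> rels (defin m Pr)"
  then obtain \<alpha> where a: "\<alpha> \<in> At m" "r \<in> rels \<alpha>"
    unfolding defin_def rels_Disjl charf_def rels_Conjl
    by (auto simp: set_list_of[OF finite_GT] set_list_of[OF finite_At] rels_Conjl split: if_splits)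
  have "enc c < card CC" if "c \<in> CC" for c using bij_betw_apply[OF encb that] by simp
  then show ?thesis using a unfolding At_def by auto
qed


definition oagr :: "nat \<Rightarrow> nat \<Rightarrow> (nat \<Rightarrow> nat) \<Rightarrow> nat \<Rightarrow> (nat \<Rightarrow> nat) \<Rightarrow> bool" where
  "oagr m n1 v1 n2 v2 = (\<forall>s\<in>set (tsm m). \<forall>t\<in>set (tsm m).
     (tval n1 v1 s < tval n1 v1 t \<longleftrightarrow> tval n2 v2 s < tval n2 v2 t) \<and>
     (tval n1 v1 s = tval n1 v1 t \<longleftrightarrow> tval n2 v2 s = tval n2 v2 t))"

lemma oagrD: "oagr m n1 v1 n2 v2 \<Longrightarrow> s \<in> set (tsm m) \<Longrightarrow> t \<in> set (tsm m) \<Longrightarrow>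
     (tval n1 v1 s < tval n1 v1 t \<longleftrightarrow> tval n2 v2 s < tval n2 v2 t) \<and>
     (tval n1 v1 s = tval n1 v1 t \<longleftrightarrow> tval n2 v2 s = tval n2 v2 t)"
proof -
  assume a: "oagr m n1 v1 n2 v2" "s \<in> set (tsm m)" "t \<in> set (tsm m)"
  from a(1) have "\<forall>s\<in>set (tsm m). \<forall>t\<in>set (tsm m).
     (tval n1 v1 s < tval n1 v1 t \<longleftrightarrow> tval n2 v2 s < tval n2 v2 t) \<and>
     (tval n1 v1 s = tval n1 v1 t \<longleftrightarrow> tval n2 v2 s = tval n2 v2 t)" unfolding oagr_def .
  then show ?thesis using a(2,3) by simp
qed

definition lagr :: "nat \<Rightarrow> nat \<Rightarrow> ('a \<Rightarrow> nat set) \<Rightarrow> (nat \<Rightarrow> nat) \<Rightarrow> nat \<Rightarrow> ('a \<Rightarrow> nat set) \<Rightarrow> (nat \<Rightarrow> nat) \<Rightarrow> bool" where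
  "lagr m n1 R1 v1 n2 R2 v2 = (\<forall>t\<in>set (tsm m). lets R1 (tval n1 v1 t) = lets R2 (tval n2 v2 t))"

definition tagr :: "nat \<Rightarrow> nat \<Rightarrow> ('a \<Rightarrow> nat set) \<Rightarrow> (nat \<Rightarrow> nat) \<Rightarrow> nat \<Rightarrow> ('a \<Rightarrow> nat set) \<Rightarrow> (nat \<Rightarrow> nat) \<Rightarrow> bool" where
  "tagr m n1 R1 v1 n2 R2 v2 = (\<forall>c\<in>CC. \<forall>s\<in>set (tsm m). \<forall>t\<in>set (tsm m).
      Tsem R1 c (tval n1 v1 s) (tval n1 v1 t) = Tsem R2 c (tval n2 v2 s) (tval n2 v2 t))"

lemma tagrD: "tagr m n1 R1 v1 n2 R2 v2 \<Longrightarrow> c \<in> CC \<Longrightarrow> s \<in> set (tsm m) \<Longrightarrow> t \<in> set (tsm m) \<Longrightarrow>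
   Tsem R1 c (tval n1 v1 s) (tval n1 v1 t) = Tsem R2 c (tval n2 v2 s) (tval n2 v2 t)"
proof -
  assume a: "tagr m n1 R1 v1 n2 R2 v2" "c \<in> CC" "s \<in> set (tsm m)" "t \<in> set (tsm m)"
  from a(1) have "\<forall>c\<in>CC. \<forall>s\<in>set (tsm m). \<forall>t\<in>set (tsm m).
      Tsem R1 c (tval n1 v1 s) (tval n1 v1 t) = Tsem R2 c (tval n2 v2 s) (tval n2 v2 t)" unfolding tagr_def .
  from this a(2) have "\<forall>s\<in>set (tsm m). \<forall>t\<in>set (tsm m).
      Tsem R1 c (tval n1 v1 s) (tval n1 v1 t) = Tsem R2 c (tval n2 v2 s) (tval n2 v2 t)" by (rule bspec)
  then show ?thesis using a(3,4) by simp
qed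

lemma tyq_agr:
  assumes g1: "good n1 R1 A1 v1" and g2: "good n2 R2 A2 v2" and e: "tyq m n1 R1 A1 v1 = tyq m n2 R2 A2 v2"
  shows "oagr m n1 v1 n2 v2 \<and> lagr m n1 R1 v1 n2 R2 v2 \<and> tagr m n1 R1 v1 n2 R2 v2"
proof -
  have E: "\<alpha> \<in> At m \<Longrightarrow> sat n1 (state_interp R1 A1) v1 \<alpha> = sat n2 (state_interp R2 A2) v2 \<alpha>" for \<alpha>
    using e unfolding tyq_def set_eq_iff by blast
  have r1: "tval n1 v1 t \<in> {1..n1}" for t using g1 tval_range unfolding good_def by blast
  have r2: "tval n2 v2 t \<in> {1..n2}" for t using g2 tval_range unfolding good_def by blast
  have a1: "auxinv n1 R1 A1" and a2: "auxinv n2 R2 A2" using g1 g2 unfolding good_def by auto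
  have "oagr m n1 v1 n2 v2"
    unfolding oagr_def
  proof (intro ballI conjI)
    fix s t assume st: "s \<in> set (tsm m)" "t \<in> set (tsm m)"
    have a1: "Less s t \<in> At m" and a2: "Eq s t \<in> At m" using st unfolding At_def by auto
    show "(tval n1 v1 s < tval n1 v1 t) = (tval n2 v2 s < tval n2 v2 t)" using E[OF a1] by simp
    show "(tval n1 v1 s = tval n1 v1 t) = (tval n2 v2 s = tval n2 v2 t)" using E[OF a2] by simp
  qed
  moreover have "lagr m n1 R1 v1 n2 R2 v2"
    unfolding lagr_def
  proof (intro ballI)
    fix t assume t: "t \<in> set (tsm m)"
    have "Atom (Inl a) [t] \<in> At m" for a using t unfolding At_def by auto
    then have "tval n1 v1 t \<in> R1 a \<longleftrightarrow> tval n2 v2 t \<in> R2 a" for a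
      using E[of "Atom (Inl a) [t]"] by (simp add: state_interp_def inp_interp_def)
    then show "lets R1 (tval n1 v1 t) = lets R2 (tval n2 v2 t)" unfolding lets_def by auto
  qed
  moreover have "tagr m n1 R1 v1 n2 R2 v2"
    unfolding tagr_def
  proof (intro ballI)
    fix c s t assume c: "c \<in> CC" and st: "s \<in> set (tsm m)" "t \<in> set (tsm m)"
    have at: "Atom (Inr (enc c)) [s,t] \<in> At m" unfolding At_def
      by (rule UnI2, rule image_eqI[where x="(c,s,t)"]) (use c st in auto)
    then have "[tval n1 v1 s, tval n1 v1 t] \<in> A1 (enc c) \<longleftrightarrow> [tval n2 v2 s, tval n2 v2 t] \<in> A2 (enc c)"
      using E[OF at] by (simp add: state_interp_def)
    then show "Tsem R1 c (tval n1 v1 s) (tval n1 v1 t) = Tsem R2 c (tval n2 v2 s) (tval n2 v2 t)"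
      using a1 a2 c r1 r2 unfolding auxinv_def by auto
  qed
  ultimately show ?thesis by blast
qed

definition pt :: "nat \<Rightarrow> dterm \<Rightarrow> dterm option" where
  "pt k s = (case s of Var i \<Rightarrow> (if i < k then Some (Var i) else if i = k then None else Some dterm.Min)
      | dterm.Min \<Rightarrow> Some dterm.Min | dterm.Max \<Rightarrow> Some dterm.Max)"

lemma pt_val: "tval n (env (map v [0..<k] @ [y])) s = (case pt k s of None \<Rightarrow> y | Some t \<Rightarrow> tval n v t)"
  by (cases s) (auto simp: pt_def env_def nth_append)

lemma pt_in: "k \<le> m \<Longrightarrow> pt k s = Some t \<Longrightarrow> t \<in> set (tsm m)"
  by (cases s) (auto simp: pt_def tsm_def split: if_splits)

lemma newlet:
  assumes k: "fst \<rho> = k" "k \<le> m"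
    and o: "oagr m n1 v1 n2 v2" and l: "lagr m n1 R1 v1 n2 R2 v2"
    and pr: "\<forall>t\<in>set (tsm m). (y1 < tval n1 v1 t \<longleftrightarrow> y2 < tval n2 v2 t) \<and> (tval n1 v1 t < y1 \<longleftrightarrow> tval n2 v2 t < y2)
          \<and> (y1 = tval n1 v1 t \<longleftrightarrow> y2 = tval n2 v2 t)"
    and ly: "lets R1 y1 = lets R2 y2"
    and r: "y1 \<in> {1..n1}" "y2 \<in> {1..n2}"
  shows "lets (apply_rq n1 \<rho> (map v1 [0..<k]) R1) y1 = lets (apply_rq n2 \<rho> (map v2 [0..<k]) R2) y2"
proof -
  let ?e1 = "env (map v1 [0..<k] @ [y1])" and ?e2 = "env (map v2 [0..<k] @ [y2])"
  have V1: "tval n1 ?e1 s = (case pt k s of None \<Rightarrow> y1 | Some t \<Rightarrow> tval n1 v1 t)" for s by (rule pt_val)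
  have V2: "tval n2 ?e2 s = (case pt k s of None \<Rightarrow> y2 | Some t \<Rightarrow> tval n2 v2 t)" for s by (rule pt_val)
  have prD: "t \<in> set (tsm m) \<Longrightarrow> (y1 < tval n1 v1 t \<longleftrightarrow> y2 < tval n2 v2 t) \<and> (tval n1 v1 t < y1 \<longleftrightarrow> tval n2 v2 t < y2)
          \<and> (y1 = tval n1 v1 t \<longleftrightarrow> y2 = tval n2 v2 t)" for t using pr by blast
  have both: "((tval n1 ?e1 s < tval n1 ?e1 t) = (tval n2 ?e2 s < tval n2 ?e2 t)) \<and>
              ((tval n1 ?e1 s = tval n1 ?e1 t) = (tval n2 ?e2 s = tval n2 ?e2 t))" for s t
  proof (cases "pt k s")
    case sN: None
    show ?thesis
    proof (cases "pt k t")
      case None then show ?thesis using sN by (simp add: V1 V2)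
    next
      case (Some t') then show ?thesis using sN prD[OF pt_in[OF k(2) Some]] by (simp add: V1 V2)
    qed
  next
    case sS: (Some s')
    show ?thesis
    proof (cases "pt k t")
      case None then show ?thesis using sS prD[OF pt_in[OF k(2) sS]] by (auto simp: V1 V2)
    next
      case (Some t') then show ?thesis using sS oagrD[OF o pt_in[OF k(2) sS] pt_in[OF k(2) Some]]
        by (simp add: V1 V2)
    qed
  qed
  have lt: "(tval n1 ?e1 s < tval n1 ?e1 t) = (tval n2 ?e2 s < tval n2 ?e2 t)" for s t using both by blast
  have eq: "(tval n1 ?e1 s = tval n1 ?e1 t) = (tval n2 ?e2 s = tval n2 ?e2 t)" for s t using both by blast
  have lv: "lets R1 (tval n1 ?e1 s) = lets R2 (tval n2 ?e2 s)" for s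
  proof (cases "pt k s")
    case None then show ?thesis using ly by (simp add: V1 V2)
  next
    case (Some s') then show ?thesis using l pt_in[OF k(2) Some] unfolding lagr_def by (simp add: V1 V2)
  qed
  have at: "(map (tval n1 ?e1) ts \<in> inp_interp R1 a) = (map (tval n2 ?e2) ts \<in> inp_interp R2 a)" for ts a
  proof -
    have "tval n1 ?e1 x \<in> R1 a \<longleftrightarrow> tval n2 ?e2 x \<in> R2 a" for x
      using lv[of x] unfolding lets_def set_eq_iff by auto
    note X = this
    show ?thesis by (cases ts rule: remdups_adj.cases) (simp_all only: inp_map list.case X)
  qed
  have SAT: "sat n1 (inp_interp R1) ?e1 \<mu> = sat n2 (inp_interp R2) ?e2 \<mu>" for \<mu>
    by (rule sat_cong[OF lt eq at])
  have ly': "y1 \<in> R1 a \<longleftrightarrow> y2 \<in> R2 a" for a using ly unfolding lets_def by blast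
  show ?thesis unfolding lets_def apply_rq_def
    apply (rule Collect_cong)
    subgoal for a using r by (cases "snd \<rho> a") (simp_all add: ly' SAT)
    done
qed

lemma newlet_term:
  assumes k: "fst \<rho> = k" "k \<le> m"
    and o: "oagr m n1 v1 n2 v2" and l: "lagr m n1 R1 v1 n2 R2 v2" and s: "s \<in> set (tsm m)"
    and r: "1 \<le> n1" "\<forall>i. v1 i \<in> {1..n1}" "1 \<le> n2" "\<forall>i. v2 i \<in> {1..n2}"
  shows "lets (apply_rq n1 \<rho> (map v1 [0..<k]) R1) (tval n1 v1 s) = lets (apply_rq n2 \<rho> (map v2 [0..<k]) R2) (tval n2 v2 s)"
proof (rule newlet[OF k o l])
  show "\<forall>t\<in>set (tsm m). (tval n1 v1 s < tval n1 v1 t \<longleftrightarrow> tval n2 v2 s < tval n2 v2 t) \<and> (tval n1 v1 t < tval n1 v1 s \<longleftrightarrow> tval n2 v2 t < tval n2 v2 s)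
          \<and> (tval n1 v1 s = tval n1 v1 t \<longleftrightarrow> tval n2 v2 s = tval n2 v2 t)"
    using oagrD[OF o s] oagrD[OF o _ s] by blast
  show "lets R1 (tval n1 v1 s) = lets R2 (tval n2 v2 s)" using l s unfolding lagr_def by simp
  show "tval n1 v1 s \<in> {1..n1}" "tval n2 v2 s \<in> {1..n2}" using r tval_range by blast+
qed

lemma segpt_abs:
  fixes fa fb :: "'t \<Rightarrow> nat"
  assumes o: "\<forall>s\<in>T. \<forall>t\<in>T. (fa s < fa t \<longleftrightarrow> fb s < fb t) \<and> (fa s = fa t \<longleftrightarrow> fb s = fb t)"
    and ab: "ta \<in> T" "tb \<in> T"
    and nb: "\<not> (\<exists>tc\<in>T. fa ta < fa tc \<and> fa tc < fa tb)"
    and y: "fa ta < ya" "ya < fa tb" "fb ta < yb" "yb < fb tb"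
    and t: "t \<in> T"
  shows "(ya < fa t \<longleftrightarrow> yb < fb t) \<and> (fa t < ya \<longleftrightarrow> fb t < yb) \<and> (ya = fa t \<longleftrightarrow> yb = fb t)"
proof -
  have h1: "fa t < fa ta \<longleftrightarrow> fb t < fb ta" and h2: "fa t = fa ta \<longleftrightarrow> fb t = fb ta"
    and h3: "fa tb < fa t \<longleftrightarrow> fb tb < fb t" and h4: "fa t = fa tb \<longleftrightarrow> fb t = fb tb"
    using o t ab by blast+
  have nt: "\<not> (fa ta < fa t \<and> fa t < fa tb)" using nb t by blast
  show ?thesis
  proof (cases "fa t \<le> fa ta")
    case True
    then have "fb t \<le> fb ta" using h1 h2 by (simp add: le_less)
    then show ?thesis using True y by linarith
  next
    case False
    then have a: "fa tb \<le> fa t" using nt by auto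
    then have "fb tb \<le> fb t" using h3 h4 by (auto simp: le_less)
    then show ?thesis using a y by linarith
  qed
qed
lemma segpt:
  assumes o: "oagr m na va nb vb" and ab: "ta \<in> set (tsm m)" "tb \<in> set (tsm m)"
    and nb: "\<not> (\<exists>tc\<in>set (tsm m). tval na va ta < tval na va tc \<and> tval na va tc < tval na va tb)"
    and y: "tval na va ta < ya" "ya < tval na va tb" "tval nb vb ta < yb" "yb < tval nb vb tb"
  shows "\<forall>t\<in>set (tsm m). (ya < tval na va t \<longleftrightarrow> yb < tval nb vb t) \<and> (tval na va t < ya \<longleftrightarrow> tval nb vb t < yb)
          \<and> (ya = tval na va t \<longleftrightarrow> yb = tval nb vb t)"
proof
  fix t assume t: "t \<in> set (tsm m)"
  from o have o': "\<forall>s\<in>set (tsm m). \<forall>t\<in>set (tsm m). (tval na va s < tval na va t \<longleftrightarrow> tval nb vb s < tval nb vb t) \<and>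
     (tval na va s = tval na va t \<longleftrightarrow> tval nb vb s = tval nb vb t)" unfolding oagr_def .
  show "(ya < tval na va t \<longleftrightarrow> yb < tval nb vb t) \<and> (tval na va t < ya \<longleftrightarrow> tval nb vb t < yb)
          \<and> (ya = tval na va t \<longleftrightarrow> yb = tval nb vb t)"
    by (rule segpt_abs[OF o' ab nb y t])
qed

lemma oagr_refl: "oagr m n v n v" unfolding oagr_def by simp
lemma lagr_refl: "lagr m n R v n R v" unfolding lagr_def by simp

lemma seg_case:
  assumes k: "fst \<rho> = k" "k \<le> m"
    and r: "1 \<le> n1" "\<forall>i. v1 i \<in> {1..n1}" "1 \<le> n2" "\<forall>i. v2 i \<in> {1..n2}"
    and o: "oagr m n1 v1 n2 v2" and l: "lagr m n1 R1 v1 n2 R2 v2" and tg: "tagr m n1 R1 v1 n2 R2 v2"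
    and ab: "ta \<in> set (tsm m)" "tb \<in> set (tsm m)" and q: "q \<in> S"
    and nb: "\<not> (\<exists>tc\<in>set (tsm m). tval n1 v1 ta < tval n1 v1 tc \<and> tval n1 v1 tc < tval n1 v1 tb)"
  shows "foldl \<delta> q (seg h (apply_rq n1 \<rho> (map v1 [0..<k]) R1) (tval n1 v1 ta) (tval n1 v1 tb))
       = foldl \<delta> q (seg h (apply_rq n2 \<rho> (map v2 [0..<k]) R2) (tval n2 v2 ta) (tval n2 v2 tb))"
proof -
  define u1 where "u1 = tval n1 v1 ta"
  define w1 where "w1 = tval n1 v1 tb"
  define u2 where "u2 = tval n2 v2 ta"
  define w2 where "w2 = tval n2 v2 tb"
  define R1' where "R1' = apply_rq n1 \<rho> (map v1 [0..<k]) R1"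
  define R2' where "R2' = apply_rq n2 \<rho> (map v2 [0..<k]) R2"
  have ru1: "u1 \<in> {1..n1}" "w1 \<in> {1..n1}" using r tval_range unfolding u1_def w1_def by blast+
  have ru2: "u2 \<in> {1..n2}" "w2 \<in> {1..n2}" using r tval_range unfolding u2_def w2_def by blast+
  have nb2: "\<not> (\<exists>tc\<in>set (tsm m). tval n2 v2 ta < tval n2 v2 tc \<and> tval n2 v2 tc < tval n2 v2 tb)"
  proof
    assume "\<exists>tc\<in>set (tsm m). tval n2 v2 ta < tval n2 v2 tc \<and> tval n2 v2 tc < tval n2 v2 tb"
    then obtain tc where tc: "tc \<in> set (tsm m)" "tval n2 v2 ta < tval n2 v2 tc" "tval n2 v2 tc < tval n2 v2 tb" by blast
    have "tval n1 v1 ta < tval n1 v1 tc" using oagrD[OF o ab(1) tc(1)] tc(2) by blast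
    moreover have "tval n1 v1 tc < tval n1 v1 tb" using oagrD[OF o tc(1) ab(2)] tc(3) by blast
    ultimately show False using nb tc(1) by blast
  qed
  define G where "G X = (if \<exists>y. u1 < y \<and> y < w1 \<and> lets R1 y = X
       then lets R1' (SOME y. u1 < y \<and> y < w1 \<and> lets R1 y = X)
       else lets R2' (SOME y. u2 < y \<and> y < w2 \<and> lets R2 y = X))" for X
  have G1: "lets R1' y = G (lets R1 y)" if y: "u1 < y" "y < w1" for y
  proof -
    have ex: "\<exists>y'. u1 < y' \<and> y' < w1 \<and> lets R1 y' = lets R1 y" using y by blast
    define y0 where "y0 = (SOME y'. u1 < y' \<and> y' < w1 \<and> lets R1 y' = lets R1 y)"
    have y0: "u1 < y0" "y0 < w1" "lets R1 y0 = lets R1 y" using someI_ex[OF ex] unfolding y0_def by blast+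
    have "lets R1' y0 = lets R1' y" unfolding R1'_def
      apply (rule newlet[OF k oagr_refl lagr_refl])
      apply (rule segpt[OF oagr_refl ab nb])
      using y0 y ru1 unfolding u1_def w1_def by auto
    then show ?thesis unfolding G_def using ex y0_def by simp
  qed
  have G2: "lets R2' y = G (lets R2 y)" if y: "u2 < y" "y < w2" for y
  proof (cases "\<exists>y'. u1 < y' \<and> y' < w1 \<and> lets R1 y' = lets R2 y")
    case True
    define y0 where "y0 = (SOME y'. u1 < y' \<and> y' < w1 \<and> lets R1 y' = lets R2 y)"
    have y0: "u1 < y0" "y0 < w1" "lets R1 y0 = lets R2 y" using someI_ex[OF True] unfolding y0_def by blast+
    have "lets R1' y0 = lets R2' y" unfolding R1'_def R2'_def
      apply (rule newlet[OF k o l])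
      apply (rule segpt[OF o ab nb])
      using y0 y ru1 ru2 unfolding u1_def w1_def u2_def w2_def by auto
    then show ?thesis unfolding G_def using True y0_def by simp
  next
    case False
    have ex: "\<exists>y'. u2 < y' \<and> y' < w2 \<and> lets R2 y' = lets R2 y" using y by blast
    define y0 where "y0 = (SOME y'. u2 < y' \<and> y' < w2 \<and> lets R2 y' = lets R2 y)"
    have y0: "u2 < y0" "y0 < w2" "lets R2 y0 = lets R2 y" using someI_ex[OF ex] unfolding y0_def by blast+
    have "lets R2' y0 = lets R2' y" unfolding R2'_def
      apply (rule newlet[OF k oagr_refl lagr_refl])
      apply (rule segpt[OF oagr_refl ab nb2])
      using y0 y ru2 unfolding u2_def w2_def by auto
    then show ?thesis unfolding G_def if_not_P[OF False] y0_def by simp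
  qed
  have s1: "seg h R1' u1 w1 = seg (h \<circ> G) R1 u1 w1"
    unfolding seg_def by (rule arg_cong[where f=concat], rule map_cong) (auto simp: G1)
  have s2: "seg h R2' u2 w2 = seg (h \<circ> G) R2 u2 w2"
    unfolding seg_def by (rule arg_cong[where f=concat], rule map_cong) (auto simp: G2)
  define q' where "q' = foldl \<delta> q (seg (h \<circ> G) R1 u1 w1)"
  have q'S: "q' \<in> S" unfolding q'_def using foldl_S q by blast
  have c: "(h \<circ> G, q, q') \<in> CC" using q q'S by simp
  have "Tsem R1 (h \<circ> G, q, q') u1 w1" unfolding Tsem_def q'_def by simp
  then have "Tsem R2 (h \<circ> G, q, q') u2 w2" using tagrD[OF tg c ab] unfolding u1_def w1_def u2_def w2_def by simp
  then have "foldl \<delta> q (seg (h \<circ> G) R2 u2 w2) = q'" unfolding Tsem_def by simp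
  then show ?thesis using s1 s2 unfolding q'_def R1'_def R2'_def u1_def w1_def u2_def w2_def by simp
qed

lemma claim:
  assumes k: "fst \<rho> = k" "k \<le> m"
    and r: "1 \<le> n1" "\<forall>i. v1 i \<in> {1..n1}" "1 \<le> n2" "\<forall>i. v2 i \<in> {1..n2}"
    and o: "oagr m n1 v1 n2 v2" and l: "lagr m n1 R1 v1 n2 R2 v2" and tg: "tagr m n1 R1 v1 n2 R2 v2"
  shows "ta \<in> set (tsm m) \<Longrightarrow> tb \<in> set (tsm m) \<Longrightarrow> q \<in> S \<Longrightarrow>
     foldl \<delta> q (seg h (apply_rq n1 \<rho> (map v1 [0..<k]) R1) (tval n1 v1 ta) (tval n1 v1 tb))
       = foldl \<delta> q (seg h (apply_rq n2 \<rho> (map v2 [0..<k]) R2) (tval n2 v2 ta) (tval n2 v2 tb))"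
proof (induction "card {x \<in> tval n1 v1 ` set (tsm m). tval n1 v1 ta < x \<and> x < tval n1 v1 tb}"
    arbitrary: ta tb q rule: less_induct)
  case less
  show ?case
  proof (cases "\<exists>tc\<in>set (tsm m). tval n1 v1 ta < tval n1 v1 tc \<and> tval n1 v1 tc < tval n1 v1 tb")
    case False
    then show ?thesis using seg_case[OF k r o l tg less(2,3,4)] by blast
  next
    case True
    then obtain tc where tc: "tc \<in> set (tsm m)" "tval n1 v1 ta < tval n1 v1 tc" "tval n1 v1 tc < tval n1 v1 tb"
      by blast
    have tc2: "tval n2 v2 ta < tval n2 v2 tc" "tval n2 v2 tc < tval n2 v2 tb"
      using oagrD[OF o less(2) tc(1)] oagrD[OF o tc(1) less(3)] tc by blast+
    let ?V = "tval n1 v1 ` set (tsm m)"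
    have fin: "finite {x \<in> ?V. tval n1 v1 ta < x \<and> x < tval n1 v1 tb}" by simp
    have tcin: "tval n1 v1 tc \<in> {x \<in> ?V. tval n1 v1 ta < x \<and> x < tval n1 v1 tb}" using tc by auto
    have lt1: "card {x \<in> ?V. tval n1 v1 ta < x \<and> x < tval n1 v1 tc} < card {x \<in> ?V. tval n1 v1 ta < x \<and> x < tval n1 v1 tb}"
      by (rule psubset_card_mono[OF fin]) (use tc tcin in auto)
    have lt2: "card {x \<in> ?V. tval n1 v1 tc < x \<and> x < tval n1 v1 tb} < card {x \<in> ?V. tval n1 v1 ta < x \<and> x < tval n1 v1 tb}"
      by (rule psubset_card_mono[OF fin]) (use tc tcin in auto)
    define R1' where "R1' = apply_rq n1 \<rho> (map v1 [0..<k]) R1"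
    define R2' where "R2' = apply_rq n2 \<rho> (map v2 [0..<k]) R2"
    define q1 where "q1 = foldl \<delta> q (seg h R1' (tval n1 v1 ta) (tval n1 v1 tc))"
    have IH1: "q1 = foldl \<delta> q (seg h R2' (tval n2 v2 ta) (tval n2 v2 tc))"
      using less(1)[OF lt1 less(2) tc(1) less(4)] unfolding q1_def R1'_def R2'_def by blast
    have q1S: "q1 \<in> S" unfolding q1_def using foldl_S less(4) by blast
    have mid: "lets R1' (tval n1 v1 tc) = lets R2' (tval n2 v2 tc)"
      unfolding R1'_def R2'_def by (rule newlet_term[OF k o l tc(1) r])
    define q2 where "q2 = foldl \<delta> q1 (symb (h (lets R1' (tval n1 v1 tc))))"
    have q2S: "q2 \<in> S" unfolding q2_def using foldl_S q1S by blast
    have IH2: "foldl \<delta> q2 (seg h R1' (tval n1 v1 tc) (tval n1 v1 tb)) = foldl \<delta> q2 (seg h R2' (tval n2 v2 tc) (tval n2 v2 tb))"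
      using less(1)[OF lt2 tc(1) less(3) q2S] unfolding R1'_def R2'_def by blast
    show ?thesis
      unfolding R1'_def[symmetric] R2'_def[symmetric]
      using seg_split[OF tc(2,3), of h R1'] seg_split[OF tc2, of h R2'] IH1 IH2 mid
      unfolding q2_def q1_def by simp
  qed
qed

definition PropT :: "'a rq \<Rightarrow> ('a set \<Rightarrow> 'a set) \<times> nat \<times> nat \<Rightarrow> nat \<Rightarrow> ('a \<Rightarrow> nat set) \<Rightarrow> (nat \<Rightarrow> nat) \<Rightarrow> bool" where
  "PropT \<rho> c n R v = Tsem (apply_rq n \<rho> (map v [0..<fst \<rho>]) R) c (v (fst \<rho>)) (v (Suc (fst \<rho>)))"

definition PropQ :: "'a rq \<Rightarrow> nat \<Rightarrow> ('a \<Rightarrow> nat set) \<Rightarrow> (nat \<Rightarrow> nat) \<Rightarrow> bool" where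
  "PropQ \<rho> n R v = (foldl \<delta> q0 (word n (apply_rq n \<rho> (map v [0..<fst \<rho>]) R)) \<in> F)"

lemma tsm_Var: "i < m \<Longrightarrow> Var i \<in> set (tsm m)" unfolding tsm_def by auto
lemma tsm_MinMax: "dterm.Min \<in> set (tsm m)" "dterm.Max \<in> set (tsm m)" unfolding tsm_def by auto

lemma invT:
  assumes g1: "good n1 R1 A1 v1" and g2: "good n2 R2 A2 v2"
    and e: "tyq (fst \<rho> + 2) n1 R1 A1 v1 = tyq (fst \<rho> + 2) n2 R2 A2 v2" and c: "c \<in> CC"
    and p: "PropT \<rho> c n1 R1 v1"
  shows "PropT \<rho> c n2 R2 v2"
proof -
  obtain h q q' where hq: "c = (h, q, q')" by (cases c) auto
  have q: "q \<in> S" using c hq by simp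
  have ag: "oagr (fst \<rho> + 2) n1 v1 n2 v2" "lagr (fst \<rho> + 2) n1 R1 v1 n2 R2 v2" "tagr (fst \<rho> + 2) n1 R1 v1 n2 R2 v2"
    using tyq_agr[OF g1 g2 e] by auto
  have r: "1 \<le> n1" "\<forall>i. v1 i \<in> {1..n1}" "1 \<le> n2" "\<forall>i. v2 i \<in> {1..n2}" using g1 g2 unfolding good_def by auto
  have "foldl \<delta> q (seg h (apply_rq n1 \<rho> (map v1 [0..<fst \<rho>]) R1) (tval n1 v1 (Var (fst \<rho>))) (tval n1 v1 (Var (Suc (fst \<rho>)))))
       = foldl \<delta> q (seg h (apply_rq n2 \<rho> (map v2 [0..<fst \<rho>]) R2) (tval n2 v2 (Var (fst \<rho>))) (tval n2 v2 (Var (Suc (fst \<rho>)))))"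
    by (rule claim[OF refl _ r ag]) (auto intro: tsm_Var q)
  then show ?thesis using p unfolding PropT_def Tsem_def hq by simp
qed

lemma invQ:
  assumes g1: "good n1 R1 A1 v1" and g2: "good n2 R2 A2 v2"
    and e: "tyq (fst \<rho>) n1 R1 A1 v1 = tyq (fst \<rho>) n2 R2 A2 v2"
    and p: "PropQ \<rho> n1 R1 v1"
  shows "PropQ \<rho> n2 R2 v2"
proof -
  let ?k = "fst \<rho>"
  have ag: "oagr ?k n1 v1 n2 v2" "lagr ?k n1 R1 v1 n2 R2 v2" "tagr ?k n1 R1 v1 n2 R2 v2"
    using tyq_agr[OF g1 g2 e] by auto
  have r: "1 \<le> n1" "\<forall>i. v1 i \<in> {1..n1}" "1 \<le> n2" "\<forall>i. v2 i \<in> {1..n2}" using g1 g2 unfolding good_def by auto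
  define R1' where "R1' = apply_rq n1 \<rho> (map v1 [0..<?k]) R1"
  define R2' where "R2' = apply_rq n2 \<rho> (map v2 [0..<?k]) R2"
  have mn: "(tval n1 v1 dterm.Min = tval n1 v1 dterm.Max) = (tval n2 v2 dterm.Min = tval n2 v2 dterm.Max)"
    using oagrD[OF ag(1) tsm_MinMax] by blast
  have L1: "lets R1' 1 = lets R2' 1"
    using newlet_term[OF refl order_refl ag(1,2) tsm_MinMax(1) r] unfolding R1'_def R2'_def by simp
  have Ln: "lets R1' n1 = lets R2' n2"
    using newlet_term[OF refl order_refl ag(1,2) tsm_MinMax(2) r] unfolding R1'_def R2'_def by simp
  have "foldl \<delta> q0 (word n1 R1') = foldl \<delta> q0 (word n2 R2')"
  proof (cases "n1 = 1")
    case True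
    then have "n2 = 1" using mn r by auto
    have w1: "word 1 R1' = symb (lets R1' 1)" "word 1 R2' = symb (lets R2' 1)" by (rule word_one)+
    show ?thesis using True \<open>n2 = 1\<close> w1 L1 by simp
  next
    case False
    then have n: "2 \<le> n1" "2 \<le> n2" using mn r by auto
    define q where "q = foldl \<delta> q0 (symb (lets R1' 1))"
    have qS: "q \<in> S" unfolding q_def using foldl_S q0S by blast
    have "foldl \<delta> q (seg id R1' (tval n1 v1 dterm.Min) (tval n1 v1 dterm.Max))
        = foldl \<delta> q (seg id R2' (tval n2 v2 dterm.Min) (tval n2 v2 dterm.Max))"
      unfolding R1'_def R2'_def by (rule claim[OF refl order_refl r ag tsm_MinMax qS])
    then have mid: "foldl \<delta> q (seg id R1' 1 n1) = foldl \<delta> q (seg id R2' 1 n2)" by simp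
    have e1: "foldl \<delta> q0 (word n1 R1') = foldl \<delta> (foldl \<delta> q (seg id R1' 1 n1)) (symb (lets R1' n1))"
      unfolding word_split[OF n(1)] q_def by simp
    have e2: "foldl \<delta> q0 (word n2 R2') = foldl \<delta> (foldl \<delta> q (seg id R2' 1 n2)) (symb (lets R2' n2))"
      unfolding word_split[OF n(2)] q_def L1 by simp
    show ?thesis unfolding e1 e2 mid Ln ..
  qed
  then show ?thesis using p unfolding PropQ_def R1'_def R2'_def by simp
qed

definition Pdp :: "'a dynprog" where
  "Pdp = \<lparr>naux = Suc (card CC), arity = (\<lambda>T. if T < card CC then 2 else 0), qsym = card CC,
     upd = (\<lambda>\<rho> T. if T < card CC then defin (fst \<rho> + 2) (PropT \<rho> (inv_into CC enc T))
                   else defin (fst \<rho>) (PropQ \<rho>))\<rparr>"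

definition init0 :: "nat \<Rightarrow> nat \<Rightarrow> nat list set" where
  "init0 n T = (if T < card CC then {[i,j] | i j. i \<in> {1..n} \<and> j \<in> {1..n} \<and> Tsem (\<lambda>_. {}) (inv_into CC enc T) i j} else {})"

lemma enc_lt: "c \<in> CC \<Longrightarrow> enc c < card CC"
  using bij_betw_apply[OF encb] by auto

lemma enc_inv: "c \<in> CC \<Longrightarrow> inv_into CC enc (enc c) = c"
  using bij_betw_inv_into_left[OF encb] by auto

lemma auxinv_init: "auxinv n (\<lambda>_. {}) (init0 n)"
  unfolding auxinv_def init0_def by (simp add: enc_lt enc_inv)

lemma good_env: "1 \<le> n \<Longrightarrow> auxinv n R A \<Longrightarrow> set xs \<subseteq> {1..n} \<Longrightarrow> good n R A (env xs)"
  unfolding good_def env_def by (auto dest: nth_mem)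

lemma PropT_env: "length as = fst \<rho> \<Longrightarrow> PropT \<rho> c n R (env (as @ [i,j])) = Tsem (apply_rq n \<rho> as R) c i j"
  unfolding PropT_def by (simp add: map_env env_def nth_append)

lemma Pdp_simps: "naux Pdp = Suc (card CC)" "qsym Pdp = card CC"
  "arity Pdp (card CC) = 0" "T < card CC \<Longrightarrow> arity Pdp T = 2"
  "upd Pdp \<rho> T = (if T < card CC then defin (fst \<rho> + 2) (PropT \<rho> (inv_into CC enc T))
                   else defin (fst \<rho>) (PropQ \<rho>))"
  by (simp_all add: Pdp_def)

lemma step:
  assumes n: "1 \<le> n" and len: "length as = fst \<rho>" and as: "set as \<subseteq> {1..n}" and a: "auxinv n R A"
  shows "auxinv n (apply_rq n \<rho> as R) (upd_aux n Pdp \<rho> as R A)"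
    and "([] \<in> upd_aux n Pdp \<rho> as R A (card CC)) = (foldl \<delta> q0 (word n (apply_rq n \<rho> as R)) \<in> F)"
proof -
  show "auxinv n (apply_rq n \<rho> as R) (upd_aux n Pdp \<rho> as R A)"
    unfolding auxinv_def
  proof
    fix c assume c: "c \<in> CC"
    have D: "good n R A v \<Longrightarrow> sat n (state_interp R A) v (defin (fst \<rho> + 2) (PropT \<rho> c)) \<longleftrightarrow> PropT \<rho> c n R v" for v
      by (rule defin_correct) (rule invT[OF _ _ _ c], assumption+)
    have "upd_aux n Pdp \<rho> as R A (enc c) = {bs. length bs = 2 \<and> set bs \<subseteq> {1..n} \<and>
        sat n (state_interp R A) (env (as @ bs)) (defin (fst \<rho> + 2) (PropT \<rho> c))}"
      using enc_lt[OF c] unfolding upd_aux_def Pdp_simps(1,5) enc_inv[OF c] by (simp add: Pdp_simps(4))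
    also have "\<dots> = {bs. length bs = 2 \<and> set bs \<subseteq> {1..n} \<and> PropT \<rho> c n R (env (as @ bs))}"
      apply (rule Collect_cong)
      subgoal for bs
      proof (cases "set bs \<subseteq> {1..n}")
        case True
        have "set (as @ bs) \<subseteq> {1..n}" using True as by simp
        from D[OF good_env[OF n a this]] show ?thesis by simp
      qed simp
      done
    also have "\<dots> = {[i,j] | i j. i \<in> {1..n} \<and> j \<in> {1..n} \<and> Tsem (apply_rq n \<rho> as R) c i j}"
      apply (rule set_eqI)
      subgoal for bs
        apply (cases bs rule: remdups_adj.cases)
          apply simp
         apply simp
        subgoal for x y xs by (cases xs) (auto simp: PropT_env[OF len])
        done
      done
    finally show "upd_aux n Pdp \<rho> as R A (enc c) = {[i,j] | i j. i \<in> {1..n} \<and> j \<in> {1..n} \<and> Tsem (apply_rq n \<rho> as R) c i j}" .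
  qed
  have D: "good n R A v \<Longrightarrow> sat n (state_interp R A) v (defin (fst \<rho>) (PropQ \<rho>)) \<longleftrightarrow> PropQ \<rho> n R v" for v
    by (rule defin_correct) (rule invQ, assumption+)
  have me: "map (env as) [0..<fst \<rho>] = as" using map_env[OF len, of "[]"] by simp
  have "([] \<in> upd_aux n Pdp \<rho> as R A (card CC)) = sat n (state_interp R A) (env as) (defin (fst \<rho>) (PropQ \<rho>))"
    unfolding upd_aux_def Pdp_simps(1,3,5) by simp
  also have "\<dots> = PropQ \<rho> n R (env as)" using D good_env[OF n a as] by blast
  also have "\<dots> = (foldl \<delta> q0 (word n (apply_rq n \<rho> as R)) \<in> F)" unfolding PropQ_def me ..
  finally show "([] \<in> upd_aux n Pdp \<rho> as R A (card CC)) = (foldl \<delta> q0 (word n (apply_rq n \<rho> as R)) \<in> F)" .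
qed

lemma run_ok: "1 \<le> n \<Longrightarrow> allowed_seq n \<Delta> R cs \<Longrightarrow> auxinv n R A \<Longrightarrow> cs \<noteq> [] \<Longrightarrow>
   (case run n Pdp cs R A of (R', A') \<Rightarrow> ([] \<in> A' (card CC) \<longleftrightarrow> foldl \<delta> q0 (word n R') \<in> F))"
proof (induction cs arbitrary: R A)
  case Nil then show ?case by simp
next
  case (Cons x cs)
  obtain \<rho> as where x: "x = (\<rho>, as)" by (cases x)
  from Cons.prems(2) x have al: "length as = fst \<rho>" "set as \<subseteq> {1..n}" "allowed_seq n \<Delta> (apply_rq n \<rho> as R) cs"
    by auto
  note st = step[OF Cons.prems(1) al(1,2) Cons.prems(3)]
  show ?case
  proof (cases "cs = []")
    case True then show ?thesis using x st by simp
  next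
    case False then show ?thesis using Cons.IH[OF Cons.prems(1) al(3) st(1) False] x by simp
  qed
qed

lemma maint: "dynprop_init_maintainable \<Delta> {w. foldl \<delta> q0 w \<in> F}"
  unfolding dynprop_init_maintainable_def
proof (intro exI conjI)
  show "wf_dynprog \<Delta> Pdp" unfolding wf_dynprog_def
  proof (intro conjI ballI allI impI)
    fix \<rho> T r assume r: "r \<in> rels (upd Pdp \<rho> T)"
    have "(case r of Inl _ \<Rightarrow> True | Inr T \<Rightarrow> T < card CC)"
    proof (cases "T < card CC")
      case True
      then have "r \<in> rels (defin (fst \<rho> + 2) (PropT \<rho> (inv_into CC enc T)))" using r unfolding Pdp_simps(5) by simp
      then show ?thesis by (rule rels_defin)
    next
      case False
      then have "r \<in> rels (defin (fst \<rho>) (PropQ \<rho>))" using r unfolding Pdp_simps(5) by simp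
      then show ?thesis by (rule rels_defin)
    qed
    then show "case r of Inl x \<Rightarrow> True | Inr T' \<Rightarrow> T' < naux Pdp"
      unfolding Pdp_simps(1) by (cases r) auto
  qed (simp_all only: Pdp_simps(1,2,3) lessI)
  show "maintains_init \<Delta> {w. foldl \<delta> q0 w \<in> F} Pdp init0"
    unfolding maintains_init_def
  proof (intro allI impI)
    fix n cs assume n: "1 \<le> n" and ne: "cs \<noteq> []" and al: "allowed_seq n \<Delta> (\<lambda>_. {}) cs"
    obtain R' A' where ra: "run n Pdp cs (\<lambda>_. {}) (init0 n) = (R', A')" by (cases "run n Pdp cs (\<lambda>_. {}) (init0 n)")
    have "([] \<in> A' (card CC)) = (foldl \<delta> q0 (word n R') \<in> F)"
      using run_ok[OF n al auxinv_init ne] unfolding ra by simp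
    then show "let (R, A) = run n Pdp cs (\<lambda>_. {}) (init0 n) in ([] \<in> A (qsym Pdp)) = (word n R \<in> {w. foldl \<delta> q0 w \<in> F})"
      unfolding ra Let_def Pdp_simps(2) by simp
  qed
qed

end

theorem theorem6p1:
  fixes L :: "('a::finite) list set" and \<Delta> :: "'a rq set"
  assumes "regular L" and "finite \<Delta>"
  shows "dynprop_init_maintainable \<Delta> L"
proof -
  obtain S :: "nat set" and \<delta> :: "nat \<Rightarrow> 'a \<Rightarrow> nat" and q0 F where
    reg: "finite S" "q0 \<in> S" "\<forall>q\<in>S. \<forall>a. \<delta> q a \<in> S" "F \<subseteq> S" "L = {w. foldl \<delta> q0 w \<in> F}"
    using assms(1) unfolding regular_def by blast
  have fin: "finite ((UNIV :: ('a set \<Rightarrow> 'a set) set) \<times> S \<times> S)" using reg(1) by simp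
  obtain enc :: "('a set \<Rightarrow> 'a set) \<times> nat \<times> nat \<Rightarrow> nat" where
    encb: "bij_betw enc (UNIV \<times> S \<times> S) {0..<card ((UNIV :: ('a set \<Rightarrow> 'a set) set) \<times> S \<times> S)}"
    using ex_bij_betw_finite_nat[OF fin] by blast
  show ?thesis unfolding reg(5)
    by (rule maint[OF reg(1) _ reg(2) encb]) (use reg(3) in blast)
qed

end
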